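(* Let $r\in\mathbb{N}$ (so $n=r\ge 1$), let $0<\alpha\le 1$ and let $0<\bar c<\bar c^{\ast}$. Then the capacity-achieving input distribution is $$p_X^{\ast}=\sum_{j=1}^{n+1} m_j\,\delta_{x_j},\qquad x_j=\frac{j-1}{n},\qquad m_j=\frac{e^{-\lambda^{\ast}c_j}}{z},\quad z=\sum_{j=1}^{n+1}e^{-\lambda^{\ast}c_j},\quad c_j=x_j^{\alpha},$$ for some $\lambda^{\ast}>0$ (namely the $\lambda^\ast$ for which $\sum_j m_j c_j=\bar c$). In particular $p_X^{\ast}$ is discrete with support $S_0=\{x_1,\dots,x_{n+1}\}$.
   Context: Fix $b>0$ and set $r:=1/(2b)$, $n:=\lfloor r\rfloor$. Consider the additive uniform noise channel $Y=X+N$ with $N\sim\mathrm{Uniform}(-b,b)$ independent of $X$, so the transition density is $p_N(y\mid x)=r\,\mathbf{1}_{x-b<y<x+b}$. Admissible inputs are probability distributions $p_X$ on $[0,1]$ (peak amplitude constraint). For such $p_X$ the output density is $p_Y(y;p_X)=\int p_N(y\mid x)\,dp_X(x)$, the marginal information density is $i(x;p_X)=\int p_N(y\mid x)\log\frac{p_N(y\mid x)}{p_Y(y;p_X)}\,dy\in[0,\infty]$, and $I(p_X)=\int i(x;p_X)\,dp_X(x)$ is the mutual information between $X$ and $Y$. The cost function is $c(x)=x^{\alpha}$ with $\alpha>0$. For $\bar c>0$, the capacity-achieving input distribution $p_X^{\ast}$ is the (unique) maximizer of $I(p_X)$ over probability distributions $p_X$ on $[0,1]$ with $\mathbb{E}_{p_X}[c(X)]\le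 \bar c$. Standard points and masses: let $N_r=n+1$ if $r\in\mathbb{N}$ and $N_r=2n+2$ if $r\notin\mathbb{N}$. For $j=1,\dots,N_r$ set $x_j=(j-1)/n$ if $r\in\mathbb{N}$; if $r\notin\mathbb{N}$, set $x_j=(j-1)/(2r)$ for odd $j$ and $x_j=1-(2n+2-j)/(2r)$ for even $j$. Let $S_0=\{x_1,\dots,x_{N_r}\}$. Define the unconstrained masses $m^0_j=1/(n+1)$ if $r\in\mathbb{N}$; if $r\notin\mathbb{N}$, $m^0_j=\frac{2n+2-(j-1)}{2(n+1)(n+2)}$ for odd $j$ and $m^0_j=\frac{j}{2(n+1)(n+2)}$ for even $j$. The distribution $\sum_j m^0_j\delta_{x_j}$ is the capacity-achieving input distribution without cost constraint, and the critical cost is $\bar c^{\ast}:=\sum_{j=1}^{N_r} m^0_j\,x_j^{\alpha}$ (the cost constraint is active iff $\bar c<\bar c^\ast$). *)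

theory Defs
  imports "HOL-Probability.Probability"
begin

text \<open>Uniform noise channel Y = X + N, N ~ Uniform(-b,b); r = 1/(2b).
  Logarithms are natural (the maximizer does not depend on the base).\<close>

definition unif_r :: "real \<Rightarrow> real" where
  "unif_r b = 1 / (2 * b)"

definition std_n :: "real \<Rightarrow> nat" where
  "std_n b = nat \<lfloor>unif_r b\<rfloor>"

definition pN :: "real \<Rightarrow> real \<Rightarrow> real \<Rightarrow> real" where
  "pN b y x = unif_r b * indicator {x - b<..<x + b} y"

text \<open>output density p_Y(y) = \<integral> p_N(y|x) dp_X(x) = r * P_X((y-b,y+b))\<close>
definition pY :: "real \<Rightarrow> real measure \<Rightarrow> real \<Rightarrow> real" where
  "pY b M y = unif_r b * measure M {y - b<..<y + b}"

text \<open>marginal information density i(x;p_X) \<in> [0,\<infinity>]; integrand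
  p_N(y|x) log(p_N(y|x)/p_Y(y)) is nonnegative (p_Y \<le> r) and equals +\<infinity> where p_Y(y) = 0
  inside the window, 0 outside the window (convention 0 log 0 = 0).\<close>
definition info_dens :: "real \<Rightarrow> real measure \<Rightarrow> real \<Rightarrow> ennreal" where
  "info_dens b M x =
     (\<integral>\<^sup>+ y. (if x - b < y \<and> y < x + b then
                 (if pY b M y = 0 then \<infinity>
                  else ennreal (pN b y x * ln (pN b y x / pY b M y)))
               else 0) \<partial>lborel)"

definition mutual_info :: "real \<Rightarrow> real measure \<Rightarrow> ennreal" where
  "mutual_info b M = (\<integral>\<^sup>+ x. info_dens b M x \<partial>M)"

definition admissible_input :: "real measure \<Rightarrow> bool" where
  "admissible_input M \<longleftrightarrow> prob_space M \<and> sets M = sets borel \<and> emeasure M {0..1} = 1"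

definition cost_ok :: "real \<Rightarrow> real \<Rightarrow> real measure \<Rightarrow> bool" where
  "cost_ok \<alpha> cbar M \<longleftrightarrow> (\<integral>\<^sup>+ x. ennreal (x powr \<alpha>) \<partial>M) \<le> ennreal cbar"

definition capacity_achieving :: "real \<Rightarrow> real \<Rightarrow> real \<Rightarrow> real measure \<Rightarrow> bool" where
  "capacity_achieving b \<alpha> cbar M \<longleftrightarrow>
     admissible_input M \<and> cost_ok \<alpha> cbar M \<and>
     (\<forall>M'. admissible_input M' \<and> cost_ok \<alpha> cbar M' \<longrightarrow> mutual_info b M' \<le> mutual_info b M)"

definition point_masses :: "nat set \<Rightarrow> (nat \<Rightarrow> real) \<Rightarrow> (nat \<Rightarrow> real) \<Rightarrow> real measure" where
  "point_masses J xs ms =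
     measure_of UNIV (sets borel) (\<lambda>A. ennreal (\<Sum>j\<in>J. ms j * indicator A (xs j)))"

definition crit_cost_nat :: "real \<Rightarrow> real \<Rightarrow> real" where
  "crit_cost_nat b \<alpha> =
     (let n = std_n b in \<Sum>j\<in>{1..n+1}. (1 / real (n + 1)) * (real (j - 1) / real n) powr \<alpha>)"

end

theory Submission
  imports Defs
begin

lemma powr_concave_pos:
  fixes \<alpha> :: real assumes "0 < \<alpha>" "\<alpha> \<le> 1"
  shows "concave_on {0<..} (\<lambda>x. x powr \<alpha>)"
proof (rule f''_le0_imp_concave[where f'="\<lambda>x. \<alpha> * x powr (\<alpha> - 1)" and f''="\<lambda>x. \<alpha> * ((\<alpha> - 1) * x powr (\<alpha> - 1 - 1))"])
  show "convex {(0::real)<..}" by simp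
  fix x :: real assume x: "x \<in> {0<..}"
  show "((\<lambda>x. x powr \<alpha>) has_real_derivative \<alpha> * x powr (\<alpha> - 1)) (at x)"
    using x by (auto intro!: derivative_eq_intros)
  show "((\<lambda>x. \<alpha> * x powr (\<alpha> - 1)) has_real_derivative \<alpha> * ((\<alpha> - 1) * x powr (\<alpha> - 1 - 1))) (at x)"
    using x by (auto intro!: derivative_eq_intros)
  show "\<alpha> * ((\<alpha> - 1) * x powr (\<alpha> - 1 - 1)) \<le> 0"
    using assms x by (intro mult_nonneg_nonpos mult_nonpos_nonneg) auto
qed

lemma powr_concave_ineq:
  fixes \<alpha> a b t :: real assumes "0 < \<alpha>" "\<alpha> \<le> 1" "0 \<le> a" "0 \<le> b" "0 \<le> t" "t \<le> 1"
  shows "(1-t) * a powr \<alpha> + t * b powr \<alpha> \<le> ((1-t)*a + t*b) powr \<alpha>"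
proof -
  have tp: "t \<le> t powr \<alpha>" using powr_mono'[of \<alpha> 1 t] assms by simp
  have tp2: "1 - t \<le> (1-t) powr \<alpha>" using powr_mono'[of \<alpha> 1 "1-t"] assms by simp
  consider "a = 0" | "b = 0" | "a > 0" "b > 0" using assms by linarith
  then show ?thesis
  proof cases
    case 1
    have "t * b powr \<alpha> \<le> t powr \<alpha> * b powr \<alpha>"
      by (rule mult_right_mono[OF tp]) simp
    also have "\<dots> = (t*b) powr \<alpha>" using assms by (simp add: powr_mult)
    finally show ?thesis using 1 assms by simp
  next
    case 2
    have "(1-t) * a powr \<alpha> \<le> (1-t) powr \<alpha> * a powr \<alpha>"
      by (rule mult_right_mono[OF tp2]) simp
    also have "\<dots> = ((1-t)*a) powr \<alpha>" using assms by (simp add: powr_mult)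
    finally show ?thesis using 2 assms by simp
  next
    case 3
    from concave_onD[OF powr_concave_pos[OF assms(1,2)], of t a b] 3 assms
    show ?thesis by simp
  qed
qed

definition hat :: "nat \<Rightarrow> nat \<Rightarrow> real \<Rightarrow> real" where
  "hat n j x = max 0 (1 - \<bar>real n * x - real (j - 1)\<bar>)"

lemma hat_sum:
  fixes n :: nat and f :: "nat \<Rightarrow> real" and x :: real
  assumes n: "n \<ge> 1" and x: "0 \<le> x" "x \<le> 1"
  shows "\<exists>k t. k \<in> {1..n} \<and> 0 \<le> t \<and> t \<le> 1 \<and> real n * x = real (k - 1) + t \<and>
     (\<Sum>j\<in>{1..n+1}. f j * hat n j x) = (1 - t) * f k + t * f (k+1)"
proof -
  define u where "u = real n * x"
  have u0: "0 \<le> u" and un: "u \<le> real n" using x n by (auto simp: u_def mult_le_cancel_left1)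
  define k where "k = min n (nat \<lfloor>u\<rfloor> + 1)"
  have k1: "k \<in> {1..n}" using n by (auto simp: k_def)
  have kl: "real (k - 1) \<le> u"
    using u0 un k1 by (auto simp: k_def min_def of_nat_diff) (linarith)+
  have ku: "u \<le> real k"
    using u0 un k1 by (auto simp: k_def min_def) linarith
  define t where "t = u - real (k - 1)"
  have t: "0 \<le> t" "t \<le> 1" using kl ku k1 by (auto simp: t_def of_nat_diff)
  have zero: "hat n j x = 0" if "j \<in> {1..n+1}" "j \<noteq> k" "j \<noteq> k + 1" for j
  proof -
    have "j < k \<or> j > k + 1" using that by auto
    then have "\<bar>u - real (j - 1)\<bar> \<ge> 1"
    proof
      assume "j < k"
      then have "real (j - 1) + 1 \<le> real (k - 1)" using that by (auto simp: of_nat_diff)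
      then show ?thesis using kl by linarith
    next
      assume "j > k + 1"
      then have "real (j - 1) \<ge> real k + 1" using that by (auto simp: of_nat_diff)
      then show ?thesis using ku by linarith
    qed
    then show ?thesis by (simp add: hat_def u_def[symmetric])
  qed
  have hk: "hat n k x = 1 - t" using t by (simp add: hat_def u_def[symmetric] t_def)
  have hk1: "hat n (k+1) x = t" using t k1 by (simp add: hat_def u_def[symmetric] t_def of_nat_diff)
  have "(\<Sum>j\<in>{1..n+1}. f j * hat n j x) = (\<Sum>j\<in>{k, k+1}. f j * hat n j x)"
    by (rule sum.mono_neutral_right) (use k1 zero in auto)
  also have "\<dots> = (1 - t) * f k + t * f (k+1)" using hk hk1 by simp
  finally show ?thesis using k1 t by (intro exI[of _ k] exI[of _ t]) (auto simp: t_def u_def)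
qed

lemma hat_sum_one:
  assumes n: "n \<ge> 1" and x: "0 \<le> x" "x \<le> 1"
  shows "(\<Sum>j\<in>{1..n+1}. hat n j x) = 1"
  using hat_sum[OF assms, of "\<lambda>_. 1"] by auto

lemma hat_sum_c:
  assumes n: "n \<ge> 1" and x: "0 \<le> x" "x \<le> 1" and a: "0 < \<alpha>" "\<alpha> \<le> 1"
  shows "(\<Sum>j\<in>{1..n+1}. (real (j - 1) / real n) powr \<alpha> * hat n j x) \<le> x powr \<alpha>"
proof -
  obtain k t where kt: "k \<in> {1..n}" "0 \<le> t" "t \<le> 1" "real n * x = real (k - 1) + t"
    and s: "(\<Sum>j\<in>{1..n+1}. (real (j - 1) / real n) powr \<alpha> * hat n j x)
       = (1 - t) * (real (k - 1) / real n) powr \<alpha> + t * (real (k + 1 - 1) / real n) powr \<alpha>"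
    using hat_sum[OF n x, of "\<lambda>j. (real (j - 1) / real n) powr \<alpha>"] by blast
  have "(1 - t) * real (k - 1) / real n + t * real (k + 1 - 1) / real n = x"
    using kt n by (simp add: field_simps of_nat_diff)
  then have "(1 - t) * (real (k - 1) / real n) + t * (real (k + 1 - 1) / real n) = x" by simp
  moreover have "(1 - t) * (real (k - 1) / real n) powr \<alpha> + t * (real (k + 1 - 1) / real n) powr \<alpha>
      \<le> ((1 - t) * (real (k - 1) / real n) + t * (real (k + 1 - 1) / real n)) powr \<alpha>"
    by (rule powr_concave_ineq) (use a kt in auto)
  ultimately show ?thesis using s by simp
qed


definition PM :: "nat set \<Rightarrow> (nat \<Rightarrow> real) \<Rightarrow> (nat \<Rightarrow> real) \<Rightarrow> real measure" where
  "PM J xs ms = distr (density (count_space J) (\<lambda>j. ennreal (ms j))) borel xs"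

lemma sets_PM[simp, measurable_cong]: "sets (PM J xs ms) = sets borel"
  by (simp add: PM_def)

lemma space_PM[simp]: "space (PM J xs ms) = UNIV"
  by (simp add: PM_def)

lemma emeasure_PM:
  assumes "finite J" "\<And>j. j \<in> J \<Longrightarrow> ms j \<ge> 0" "A \<in> sets borel"
  shows "emeasure (PM J xs ms) A = ennreal (\<Sum>j\<in>J. ms j * indicator A (xs j))"
proof -
  have "emeasure (PM J xs ms) A = emeasure (density (count_space J) (\<lambda>j. ennreal (ms j))) (xs -` A \<inter> J)"
    unfolding PM_def using assms by (subst emeasure_distr) auto
  also have "\<dots> = (\<integral>\<^sup>+ j. ennreal (ms j) * indicator (xs -` A \<inter> J) j \<partial>count_space J)"
    by (subst emeasure_density) auto
  also have "\<dots> = (\<Sum>j\<in>J. ennreal (ms j) * indicator (xs -` A \<inter> J) j)"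
    using assms by (simp add: nn_integral_count_space_finite)
  also have "\<dots> = (\<Sum>j\<in>J. ennreal (ms j * indicator A (xs j)))"
    by (intro sum.cong) (auto simp: indicator_def)
  also have "\<dots> = ennreal (\<Sum>j\<in>J. ms j * indicator A (xs j))"
    using assms by (intro sum_ennreal) auto
  finally show ?thesis .
qed

lemma point_masses_PM:
  assumes "finite J" "\<And>j. j \<in> J \<Longrightarrow> ms j \<ge> 0"
  shows "point_masses J xs ms = PM J xs ms"
proof -
  have "PM J xs ms = measure_of (space (PM J xs ms)) (sets (PM J xs ms)) (emeasure (PM J xs ms))"
    by (rule measure_of_of_measure[symmetric])
  also have "\<dots> = measure_of UNIV (sets borel) (emeasure (PM J xs ms))" by simp
  also have "\<dots> = point_masses J xs ms"
    unfolding point_masses_def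
  proof (rule measure_of_eq)
    show "sets borel \<subseteq> Pow UNIV" by simp
    fix a :: "real set" assume "a \<in> sigma_sets UNIV (sets borel)"
    then have "a \<in> sets borel"
      by (metis sets.sigma_sets_eq space_borel)
    then show "emeasure (PM J xs ms) a = ennreal (\<Sum>j\<in>J. ms j * indicator a (xs j))"
      using emeasure_PM assms by blast
  qed
  finally show ?thesis ..
qed

lemma nn_integral_PM:
  assumes "finite J" "\<And>j. j \<in> J \<Longrightarrow> ms j \<ge> 0" "f \<in> borel_measurable borel"
  shows "(\<integral>\<^sup>+ x. f x \<partial>PM J xs ms) = (\<Sum>j\<in>J. ennreal (ms j) * f (xs j))"
proof -
  have "(\<integral>\<^sup>+ x. f x \<partial>PM J xs ms) = (\<integral>\<^sup>+ j. f (xs j) \<partial>density (count_space J) (\<lambda>j. ennreal (ms j)))"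
    unfolding PM_def using assms by (subst nn_integral_distr) auto
  also have "\<dots> = (\<integral>\<^sup>+ j. ennreal (ms j) * f (xs j) \<partial>count_space J)"
    by (subst nn_integral_density) auto
  also have "\<dots> = (\<Sum>j\<in>J. ennreal (ms j) * f (xs j))"
    using assms by (simp add: nn_integral_count_space_finite)
  finally show ?thesis .
qed

lemma prob_space_PM:
  assumes "finite J" "\<And>j. j \<in> J \<Longrightarrow> ms j \<ge> 0" "(\<Sum>j\<in>J. ms j) = 1"
  shows "prob_space (PM J xs ms)"
proof
  show "emeasure (PM J xs ms) (space (PM J xs ms)) = 1"
    using emeasure_PM[OF assms(1,2), where A=UNIV and xs=xs] assms(3) by simp
qed


lemma win_swap: fixes x y b :: real shows "indicator {x-b<..<x+b} y = (indicator {y-b<..<y+b} x :: ennreal)"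
proof -
  have "(x-b<y \<and> y<x+b) = (y-b<x \<and> x<y+b)" by linarith
  then show ?thesis by (simp add: indicator_def)
qed

lemma meas_win:
  fixes M :: "real measure"
  assumes "sets M = sets borel" "f \<in> borel_measurable lborel"
  shows "(\<lambda>(x, y). f y * indicator {x-b<..<x+b} y :: ennreal) \<in> borel_measurable (M \<Otimes>\<^sub>M lborel)"
proof -
  have eq: "(\<lambda>(x, y). f y * indicator {x-b<..<x+b} y :: ennreal) =
        (\<lambda>p. if fst p - b < snd p \<and> snd p < fst p + b then f (snd p) else 0)"
    by (auto simp: indicator_def fun_eq_iff)
  have "(\<lambda>p. if fst p - b < snd p \<and> snd p < fst p + b then f (snd p) else 0) \<in> borel_measurable (borel \<Otimes>\<^sub>M borel)"
    using assms(2) by measurable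
  moreover have "sets (M \<Otimes>\<^sub>M lborel) = sets (borel \<Otimes>\<^sub>M borel)"
    by (intro sets_pair_measure_cong) (auto simp: assms(1))
  ultimately show ?thesis unfolding eq
    by (subst measurable_cong_sets[OF _ refl]) auto
qed

lemma meas_win2:
  fixes M :: "real measure"
  assumes "sets M = sets borel" "f \<in> borel_measurable lborel"
  shows "(\<lambda>(y, x). f y * indicator {x-b<..<x+b} y :: ennreal) \<in> borel_measurable (lborel \<Otimes>\<^sub>M M)"
proof -
  have eq: "(\<lambda>(y, x). f y * indicator {x-b<..<x+b} y :: ennreal) =
        (\<lambda>p. if snd p - b < fst p \<and> fst p < snd p + b then f (fst p) else 0)"
    by (auto simp: indicator_def fun_eq_iff)
  have "(\<lambda>p. if snd p - b < fst p \<and> fst p < snd p + b then f (fst p) else 0) \<in> borel_measurable (borel \<Otimes>\<^sub>M borel)"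
    using assms(2) by measurable
  moreover have "sets (lborel \<Otimes>\<^sub>M M) = sets (borel \<Otimes>\<^sub>M borel)"
    by (intro sets_pair_measure_cong) (auto simp: assms(1))
  ultimately show ?thesis unfolding eq
    by (subst measurable_cong_sets[OF _ refl]) auto
qed

lemma tonelli_win:
  fixes M :: "real measure"
  assumes P: "prob_space M" "sets M = sets borel" and f: "f \<in> borel_measurable lborel"
  shows "(\<integral>\<^sup>+x. (\<integral>\<^sup>+y. f y * indicator {x-b<..<x+b} y \<partial>lborel) \<partial>M)
       = (\<integral>\<^sup>+y. f y * emeasure M {y-b<..<y+b} \<partial>lborel)"
proof -
  interpret prob_space M by fact
  interpret pair_sigma_finite M lborel
    by (intro pair_sigma_finite.intro) (simp_all add: sigma_finite_measure_axioms lborel.sigma_finite_measure_axioms)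
  have "(\<integral>\<^sup>+x. (\<integral>\<^sup>+y. f y * indicator {x-b<..<x+b} y \<partial>lborel) \<partial>M)
      = (\<integral>\<^sup>+y. (\<integral>\<^sup>+x. f y * indicator {x-b<..<x+b} y \<partial>M) \<partial>lborel)"
    by (rule Fubini'[symmetric]) (rule meas_win[OF P(2) f])
  also have "\<dots> = (\<integral>\<^sup>+y. f y * emeasure M {y-b<..<y+b} \<partial>lborel)"
  proof (rule nn_integral_cong)
    fix y
    have "(\<integral>\<^sup>+x. f y * indicator {x-b<..<x+b} y \<partial>M) = (\<integral>\<^sup>+x. f y * indicator {y-b<..<y+b} x \<partial>M)"
      by (simp add: win_swap)
    also have "\<dots> = f y * emeasure M {y-b<..<y+b}"
      using P by (subst nn_integral_cmult_indicator) auto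
    finally show "(\<integral>\<^sup>+x. f y * indicator {x-b<..<x+b} y \<partial>M) = f y * emeasure M {y-b<..<y+b}" .
  qed
  finally show ?thesis .
qed

lemma meas_g:
  fixes M :: "real measure"
  assumes P: "prob_space M" "sets M = sets borel"
  shows "(\<lambda>y. emeasure M {y-b<..<y+b}) \<in> borel_measurable lborel"
proof -
  interpret prob_space M by fact
  have "(\<lambda>y. \<integral>\<^sup>+x. (\<lambda>y x. 1 * indicator {x-b<..<x+b} y) y x \<partial>M) \<in> borel_measurable lborel"
    by (rule borel_measurable_nn_integral) (rule meas_win2[OF P(2)], simp)
  moreover have "(\<integral>\<^sup>+x. 1 * indicator {x-b<..<x+b} y \<partial>M) = emeasure M {y-b<..<y+b}" for y
  proof -
    have "(\<integral>\<^sup>+x. 1 * indicator {x-b<..<x+b} y \<partial>M) = (\<integral>\<^sup>+x. indicator {y-b<..<y+b} x \<partial>M)"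
      by (intro nn_integral_cong) (simp add: win_swap)
    then show ?thesis using P by simp
  qed
  ultimately show ?thesis by simp
qed


lemma adm_AE01:
  assumes "admissible_input M" shows "AE x in M. x \<in> {0..1}"
proof -
  interpret prob_space M using assms by (simp add: admissible_input_def)
  have s: "sets M = sets borel" using assms by (simp add: admissible_input_def)
  have "{0..1::real} \<in> events" using s by simp
  then show ?thesis using assms
    by (subst AE_in_set_eq_1) (auto simp: admissible_input_def emeasure_eq_measure)
qed

lemma adm_null:
  assumes "admissible_input M" "A \<in> sets borel" "A \<inter> {0..1} = {}"
  shows "emeasure M A = 0"
proof -
  interpret prob_space M using assms by (simp add: admissible_input_def)
  have s: "sets M = sets borel" using assms by (simp add: admissible_input_def)
  have "AE x in M. x \<notin> A" using adm_AE01[OF assms(1)]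
  proof (rule AE_mp)
    show "AE x in M. x \<in> {0..1} \<longrightarrow> x \<notin> A" using assms(3) by (intro AE_I2) auto
  qed
  moreover have sp: "space M = UNIV" using sets_eq_imp_space_eq[OF s] by simp
  ultimately show ?thesis using assms(2) s by (subst AE_iff_measurable[symmetric, where P="\<lambda>x. x \<notin> A"]) auto
qed

locale chan =
  fixes n :: nat and m :: "nat \<Rightarrow> real"
  assumes n1: "n \<ge> 1" and mpos: "\<And>j. j \<in> {1..n+1} \<Longrightarrow> m j > 0"
    and msum: "(\<Sum>j\<in>{1..n+1}. m j) = 1"
begin

definition "bw = 1 / (2 * real n)"
definition "xp j = real (j - 1) / real n"
definition "II j = {xp j - bw <..< xp j + bw}"
definition "ps y = (\<Sum>j\<in>{1..n+1}. m j * indicator (II j) y)"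
definition "Lf y = (\<Sum>j\<in>{1..n+1}. ln (1 / m j) * indicator (II j) y)"

lemma bw_pos: "bw > 0" using n1 by (simp add: bw_def)
lemma n_pos: "real n > 0" using n1 by simp

lemma m_le1: "j \<in> {1..n+1} \<Longrightarrow> m j \<le> 1"
  using member_le_sum[of j "{1..n+1}" m] mpos msum by (simp add: less_imp_le)

lemma II_disj: assumes "y \<in> II j" "y \<in> II k" "j \<ge> 1" "k \<ge> 1" shows "j = k"
proof (rule ccontr)
  assume "j \<noteq> k"
  then have "\<bar>real (j - 1) - real (k - 1)\<bar> \<ge> 1" using assms by (auto simp: of_nat_diff)
  then have "\<bar>xp j - xp k\<bar> \<ge> 1 / real n" using n_pos
    by (simp add: xp_def diff_divide_distrib[symmetric] abs_divide le_divide_eq)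
  moreover have "\<bar>xp j - xp k\<bar> < 2 * bw" using assms by (auto simp: II_def)
  moreover have "2 * bw = 1 / real n" by (simp add: bw_def)
  ultimately show False by linarith
qed

lemma sum_single:
  assumes "y \<in> II k" "k \<in> {1..n+1}"
  shows "(\<Sum>j\<in>{1..n+1}. f j * indicator (II j) y) = (f k :: real)"
proof -
  have "(\<Sum>j\<in>{1..n+1}. f j * indicator (II j) y) = (\<Sum>j\<in>{k}. f j * indicator (II j) y)"
    by (rule sum.mono_neutral_right) (use assms II_disj in \<open>auto simp: indicator_def\<close>)
  then show ?thesis using assms by simp
qed

lemma ps_in: "y \<in> II k \<Longrightarrow> k \<in> {1..n+1} \<Longrightarrow> ps y = m k"
  unfolding ps_def by (rule sum_single)
lemma Lf_in: "y \<in> II k \<Longrightarrow> k \<in> {1..n+1} \<Longrightarrow> Lf y = ln (1 / m k)"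
  unfolding Lf_def by (rule sum_single)

lemma ps_nonneg: "ps y \<ge> 0" unfolding ps_def using mpos by (intro sum_nonneg) (auto simp: less_imp_le)
lemma Lf_nonneg: "Lf y \<ge> 0" unfolding Lf_def using mpos m_le1
  by (intro sum_nonneg mult_nonneg_nonneg) auto

definition "EE = (\<lambda>j. xp j + bw) ` {1..n}"

lemma cover:
  assumes "-bw < y" "y < 1 + bw" "y \<notin> EE"
  shows "\<exists>k\<in>{1..n+1}. y \<in> II k"
proof -
  define u where "u = real n * y + 1/2"
  have nb: "real n * bw = 1/2" using n_pos by (simp add: bw_def)
  have "real n * (-bw) < real n * y" by (rule mult_strict_left_mono[OF assms(1) n_pos])
  then have u0: "0 < u" using nb by (simp add: u_def)
  have "real n * y < real n * (1 + bw)" by (rule mult_strict_left_mono[OF assms(2) n_pos])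
  then have un: "u < real n + 1" using nb by (simp add: u_def distrib_left)
  define k where "k = nat \<lfloor>u\<rfloor> + 1"
  have kr: "real (k - 1) = of_int \<lfloor>u\<rfloor>" using u0 by (simp add: k_def)
  have k: "k \<in> {1..n+1}" using u0 un by (simp add: k_def) linarith
  have a: "real (k - 1) \<le> u" "u < real (k - 1) + 1" using kr by linarith+
  have ne: "u \<noteq> real (k - 1)"
  proof
    assume eq: "u = real (k - 1)"
    then have "k - 1 \<ge> 1" using u0 by (cases "k - 1") auto
    moreover have "k - 1 \<le> n" using k by auto
    moreover have "y = xp (k - 1) + bw"
    proof -
      have "real n * y = real (k - 1) - 1/2" using eq by (simp add: u_def)
      also have "\<dots> = real n * (xp (k - 1) + bw)"
        using n_pos \<open>k - 1 \<ge> 1\<close> by (simp add: xp_def bw_def field_simps of_nat_diff)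
      finally show ?thesis using n_pos by simp
    qed
    ultimately show False using assms(3) by (auto simp: EE_def)
  qed
  have "y \<in> II k"
  proof -
    have e1: "real n * (xp k - bw) = real (k - 1) - 1/2" "real n * (xp k + bw) = real (k - 1) + 1/2"
      using n_pos by (simp_all add: xp_def bw_def field_simps)
    have "real n * y = u - 1/2" by (simp add: u_def)
    then have "real n * (xp k - bw) < real n * y" "real n * y < real n * (xp k + bw)"
      using a ne e1 by linarith+
    then show ?thesis using n_pos by (auto simp: II_def mult_less_cancel_left_pos)
  qed
  then show ?thesis using k by blast
qed

lemma finite_EE: "finite EE" by (simp add: EE_def)

end

context chan begin

definition "gM M y = measure M {y - bw<..<y + bw}"

lemma unif_r_bw: "unif_r bw = real n"
  using n_pos by (simp add: unif_r_def bw_def)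

context fixes M assumes adm: "admissible_input M" begin

lemma Mprob: "prob_space M" using adm by (simp add: admissible_input_def)
lemma Msets: "sets M = sets borel" using adm by (simp add: admissible_input_def)

lemma emeasure_win: "emeasure M {y - bw<..<y + bw} = ennreal (gM M y)"
proof -
  interpret prob_space M by (rule Mprob)
  show ?thesis by (simp add: gM_def emeasure_eq_measure)
qed

lemma gM_nonneg: "0 \<le> gM M y" by (simp add: gM_def)
lemma gM_le1: "gM M y \<le> 1"
proof -
  interpret prob_space M by (rule Mprob)
  show ?thesis by (simp add: gM_def)
qed

lemma gM_meas[measurable]: "gM M \<in> borel_measurable lborel"
proof -
  have "(\<lambda>y. enn2real (emeasure M {y-bw<..<y+bw})) \<in> borel_measurable lborel"
    using meas_g[OF Mprob Msets] by measurable
  moreover have "(\<lambda>y. enn2real (emeasure M {y-bw<..<y+bw})) = gM M"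
    by (rule ext) (simp add: emeasure_win gM_nonneg)
  ultimately show ?thesis by simp
qed

lemma gM_pos_range: assumes "gM M y > 0" shows "-bw < y \<and> y < 1 + bw"
proof (rule ccontr)
  assume "\<not> (-bw < y \<and> y < 1 + bw)"
  then have "{y - bw<..<y + bw} \<inter> {0..1} = {}" by auto
  then have "emeasure M {y - bw<..<y + bw} = 0" by (intro adm_null[OF adm]) auto
  then show False using assms emeasure_win[of y] by simp
qed

definition "Fy y = (if gM M y = 0 then \<infinity> else ennreal (real n * ln (1 / gM M y)))"

lemma Fy_meas[measurable]: "Fy \<in> borel_measurable lborel"
  unfolding Fy_def by measurable

lemma info_dens_eq: "info_dens bw M x = (\<integral>\<^sup>+y. Fy y * indicator {x-bw<..<x+bw} y \<partial>lborel)"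
proof -
  have pY: "pY bw M y = real n * gM M y" for y by (simp add: pY_def unif_r_bw gM_def)
  show ?thesis unfolding info_dens_def
  proof (rule nn_integral_cong)
    fix y
    show "(if x - bw < y \<and> y < x + bw then if pY bw M y = 0 then \<infinity>
           else ennreal (pN bw y x * ln (pN bw y x / pY bw M y)) else 0) =
          Fy y * indicator {x - bw<..<x + bw} y"
      using n_pos by (auto simp: pY pN_def unif_r_bw Fy_def indicator_def)
  qed
qed

lemma mutual_info_eq: "mutual_info bw M = (\<integral>\<^sup>+y. ennreal (real n * gM M y * ln (1 / gM M y)) \<partial>lborel)"
proof -
  have "mutual_info bw M = (\<integral>\<^sup>+x. (\<integral>\<^sup>+y. Fy y * indicator {x-bw<..<x+bw} y \<partial>lborel) \<partial>M)"
  proof -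
    have "info_dens bw M = (\<lambda>x. \<integral>\<^sup>+y. Fy y * indicator {x-bw<..<x+bw} y \<partial>lborel)"
      by (rule ext) (rule info_dens_eq)
    then show ?thesis unfolding mutual_info_def by simp
  qed
  also have "\<dots> = (\<integral>\<^sup>+y. Fy y * emeasure M {y-bw<..<y+bw} \<partial>lborel)"
    by (rule tonelli_win[OF Mprob Msets]) simp
  also have "\<dots> = (\<integral>\<^sup>+y. ennreal (real n * gM M y * ln (1 / gM M y)) \<partial>lborel)"
  proof (rule nn_integral_cong)
    fix y
    show "Fy y * emeasure M {y - bw<..<y + bw} = ennreal (real n * gM M y * ln (1 / gM M y))"
    proof (cases "gM M y = 0")
      case True then show ?thesis by (simp add: Fy_def emeasure_win)
    next
      case False
      have "ln (1 / gM M y) \<ge> 0" using False gM_nonneg[of y] gM_le1[of y] by simp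
      then show ?thesis using False gM_nonneg[of y]
        by (simp add: Fy_def emeasure_win ennreal_mult[symmetric] mult_ac)
    qed
  qed
  finally show ?thesis .
qed

end
end

lemma emeasure_Ioo_inter:
  fixes a b c d :: real
  shows "emeasure lborel ({a<..<b} \<inter> {c<..<d}) = ennreal (min b d - max a c)"
proof -
  have eq: "{a<..<b} \<inter> {c<..<d} = {max a c<..<min b d}" by auto
  show ?thesis
  proof (cases "max a c \<le> min b d")
    case True then show ?thesis unfolding eq by (rule emeasure_lborel_Ioo)
  next
    case False
    then have e2: "{max a c<..<min b d} = {}" by auto
    have "min b d - max a c \<le> 0" using False by linarith
    then show ?thesis unfolding eq e2 using ennreal_neg[of "min b d - max a c"] by simp
  qed
qed

context chan begin

lemma II_meas[measurable]: "II j \<in> sets borel" by (simp add: II_def)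

lemma overlap: "emeasure lborel (II j \<inter> {x-bw<..<x+bw}) = ennreal (hat n j x / real n)"
proof -
  have e: "min (xp j + bw) (x + bw) - max (xp j - bw) (x - bw) = 1 / real n - \<bar>x - xp j\<bar>"
    by (simp add: bw_def min_def max_def)
  have "real n * x - real (j - 1) = real n * (x - xp j)"
    using n_pos by (simp add: xp_def field_simps)
  then have a: "\<bar>real n * x - real (j - 1)\<bar> = real n * \<bar>x - xp j\<bar>"
    by (simp add: abs_mult)
  have h: "hat n j x / real n = max 0 (1 / real n - \<bar>x - xp j\<bar>)"
    unfolding hat_def a using n_pos
    by (cases "1 / real n - \<bar>x - xp j\<bar> \<le> 0") (auto simp: max_def field_simps)
  show ?thesis unfolding II_def emeasure_Ioo_inter e h
    by (simp add: ennreal_max_0)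
qed

lemma II_len: "emeasure lborel (II j) = ennreal (1 / real n)"
  unfolding II_def using bw_pos by (simp add: emeasure_lborel_Ioo bw_def)

lemma ps_meas[measurable]: "ps \<in> borel_measurable borel" unfolding ps_def by measurable
lemma Lf_meas[measurable]: "Lf \<in> borel_measurable borel" unfolding Lf_def by measurable

lemma int_ps: "(\<integral>\<^sup>+y. ennreal (real n * ps y) \<partial>lborel) = 1"
proof -
  have "(\<integral>\<^sup>+y. ennreal (real n * ps y) \<partial>lborel)
      = (\<integral>\<^sup>+y. (\<Sum>j\<in>{1..n+1}. ennreal (real n * m j) * indicator (II j) y) \<partial>lborel)"
  proof (rule nn_integral_cong)
    fix y
    have "ennreal (real n * ps y) = ennreal (\<Sum>j\<in>{1..n+1}. real n * m j * indicator (II j) y)"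
      unfolding ps_def by (simp only: sum_distrib_left mult.assoc)
    also have "\<dots> = (\<Sum>j\<in>{1..n+1}. ennreal (real n * m j * indicator (II j) y))"
      using mpos by (intro sum_ennreal[symmetric]) (auto simp: less_imp_le)
    also have "\<dots> = (\<Sum>j\<in>{1..n+1}. ennreal (real n * m j) * indicator (II j) y)"
      by (intro sum.cong) (auto simp: indicator_def)
    finally show "ennreal (real n * ps y) = \<dots>" .
  qed
  also have "\<dots> = (\<Sum>j\<in>{1..n+1}. ennreal (real n * m j) * emeasure lborel (II j))"
    by (subst nn_integral_sum) (auto simp: nn_integral_cmult_indicator)
  also have "\<dots> = (\<Sum>j\<in>{1..n+1}. ennreal (m j))"
    using mpos n_pos by (intro sum.cong) (auto simp: II_len ennreal_mult[symmetric] less_imp_le)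
  also have "\<dots> = 1" using mpos msum by (subst sum_ennreal) (auto simp: less_imp_le)
  finally show ?thesis .
qed

lemma phi_eq: "(\<integral>\<^sup>+y. ennreal (real n * Lf y) * indicator {x-bw<..<x+bw} y \<partial>lborel)
   = ennreal (\<Sum>j\<in>{1..n+1}. ln (1 / m j) * hat n j x)"
proof -
  have l0: "j \<in> {1..n+1} \<Longrightarrow> ln (1 / m j) \<ge> 0" for j using mpos m_le1 by simp
  have "(\<integral>\<^sup>+y. ennreal (real n * Lf y) * indicator {x-bw<..<x+bw} y \<partial>lborel)
      = (\<integral>\<^sup>+y. (\<Sum>j\<in>{1..n+1}. ennreal (real n * ln (1 / m j)) * indicator (II j \<inter> {x-bw<..<x+bw}) y) \<partial>lborel)"
  proof (rule nn_integral_cong)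
    fix y
    have "ennreal (real n * Lf y) = ennreal (\<Sum>j\<in>{1..n+1}. real n * ln (1 / m j) * indicator (II j) y)"
      unfolding Lf_def by (simp only: sum_distrib_left mult.assoc)
    also have "\<dots> = (\<Sum>j\<in>{1..n+1}. ennreal (real n * ln (1 / m j) * indicator (II j) y))"
      using l0 by (intro sum_ennreal[symmetric]) auto
    finally have "ennreal (real n * Lf y) * indicator {x-bw<..<x+bw} y
       = (\<Sum>j\<in>{1..n+1}. ennreal (real n * ln (1 / m j) * indicator (II j) y)) * indicator {x-bw<..<x+bw} y"
      by simp
    also have "\<dots> = (\<Sum>j\<in>{1..n+1}. ennreal (real n * ln (1 / m j)) * indicator (II j \<inter> {x-bw<..<x+bw}) y)"
      by (subst sum_distrib_right) (intro sum.cong, auto simp: indicator_def)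
    finally show "ennreal (real n * Lf y) * indicator {x-bw<..<x+bw} y = \<dots>" .
  qed
  also have "\<dots> = (\<Sum>j\<in>{1..n+1}. ennreal (real n * ln (1 / m j)) * emeasure lborel (II j \<inter> {x-bw<..<x+bw}))"
    by (subst nn_integral_sum) (auto simp: nn_integral_cmult_indicator)
  also have "\<dots> = (\<Sum>j\<in>{1..n+1}. ennreal (ln (1 / m j) * hat n j x))"
  proof (intro sum.cong refl)
    fix j assume j: "j \<in> {1..n+1}"
    have h0: "hat n j x \<ge> 0" by (simp add: hat_def)
    show "ennreal (real n * ln (1 / m j)) * emeasure lborel (II j \<inter> {x-bw<..<x+bw}) = ennreal (ln (1 / m j) * hat n j x)"
      unfolding overlap using n_pos l0[OF j] h0
      by (subst ennreal_mult[symmetric]) (auto simp: field_simps)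
  qed
  also have "\<dots> = ennreal (\<Sum>j\<in>{1..n+1}. ln (1 / m j) * hat n j x)"
    using l0 by (intro sum_ennreal) (auto simp: hat_def)
  finally show ?thesis .
qed

lemma hat_node: "j \<ge> 1 \<Longrightarrow> k \<ge> 1 \<Longrightarrow> hat n j (xp k) = (if j = k then 1 else 0)"
proof -
  assume jk: "j \<ge> 1" "k \<ge> 1"
  have e: "real n * xp k - real (j - 1) = real (k - 1) - real (j - 1)"
    using n_pos by (simp add: xp_def)
  show ?thesis
  proof (cases "j = k")
    case False
    then have "\<bar>real (k - 1) - real (j - 1)\<bar> \<ge> 1" using jk by (auto simp: of_nat_diff)
    then show ?thesis using False unfolding hat_def e by simp
  qed (unfold hat_def e, simp)
qed

end

context chan begin
context fixes M assumes adm: "admissible_input M" begin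

definition Sfun :: "real \<Rightarrow> real" where "Sfun y = (if gM M y > 0 \<and> ps y > 0 then ps y / gM M y - 1 - ln (ps y / gM M y) else 0)"
definition Bfun :: "real \<Rightarrow> real" where "Bfun y = (if gM M y > 0 then real n * ps y else 0)"
definition Zfun :: "real \<Rightarrow> real" where "Zfun y = (if gM M y = 0 then real n * ps y else 0)"

lemma Sfun_nonneg: "Sfun y \<ge> 0"
  unfolding Sfun_def using ln_le_minus_one[of "ps y / gM M y"] by auto

lemma meas_aux[measurable]: "Sfun \<in> borel_measurable borel" "Bfun \<in> borel_measurable borel"
   "Zfun \<in> borel_measurable borel"
  using gM_meas[OF adm] unfolding Sfun_def Bfun_def Zfun_def by measurable

lemma ident_pt:
  assumes "y \<notin> EE"
  shows "ennreal (real n * gM M y * ln (1 / gM M y)) + ennreal (real n * gM M y) + ennreal (real n * gM M y * Sfun y)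
     = ennreal (real n * gM M y * Lf y) + ennreal (Bfun y)"
proof (cases "gM M y > 0")
  case False
  then have "gM M y = 0" using gM_nonneg[OF adm, of y] by simp
  then show ?thesis by (simp add: Bfun_def)
next
  case True
  obtain k where k: "k \<in> {1..n+1}" "y \<in> II k"
    using cover[OF _ _ assms] gM_pos_range[OF adm True] by blast
  define g where "g = gM M y"
  define p where "p = m k"
  have p: "p > 0" "p \<le> 1" using mpos[OF k(1)] m_le1[OF k(1)] by (auto simp: p_def)
  have g: "g > 0" "g \<le> 1" using True gM_le1[OF adm] by (auto simp: g_def)
  have psy: "ps y = p" "Lf y = ln (1 / p)" using ps_in[OF k(2,1)] Lf_in[OF k(2,1)] by (auto simp: p_def)
  have S: "Sfun y = p / g - 1 - ln (p / g)" using True p by (simp add: Sfun_def psy g_def)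
  have B: "Bfun y = real n * p" using True by (simp add: Bfun_def psy)
  have S0: "p / g - 1 - ln (p / g) \<ge> 0" using ln_le_minus_one[of "p / g"] p g by simp
  have l1: "ln (1 / g) \<ge> 0" "ln (1 / p) \<ge> 0" using p g by auto
  have eq: "real n * g * ln (1 / g) + real n * g + real n * g * (p / g - 1 - ln (p / g))
      = real n * g * ln (1 / p) + real n * p"
    using p g by (simp add: ln_div field_simps)
  have "ennreal (real n * g * ln (1 / g)) + ennreal (real n * g) + ennreal (real n * g * (p / g - 1 - ln (p / g)))
      = ennreal (real n * g * ln (1 / g) + real n * g + real n * g * (p / g - 1 - ln (p / g)))"
    using S0 l1 g by (simp add: ennreal_plus[symmetric] del: ennreal_plus)
  also have "\<dots> = ennreal (real n * g * ln (1 / p) + real n * p)" by (simp only: eq)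
  also have "\<dots> = ennreal (real n * g * ln (1 / p)) + ennreal (real n * p)"
    using l1 g p by (simp add: ennreal_plus[symmetric] del: ennreal_plus)
  finally show ?thesis by (simp add: S B psy g_def[symmetric])
qed

lemma int_ng: "(\<integral>\<^sup>+y. ennreal (real n * gM M y) \<partial>lborel) = 1"
proof -
  interpret prob_space M by (rule Mprob[OF adm])
  have "(\<integral>\<^sup>+x. (\<integral>\<^sup>+y. ennreal (real n) * indicator {x-bw<..<x+bw} y \<partial>lborel) \<partial>M)
       = (\<integral>\<^sup>+y. ennreal (real n) * emeasure M {y-bw<..<y+bw} \<partial>lborel)"
    by (rule tonelli_win[OF Mprob[OF adm] Msets[OF adm]]) simp
  also have "\<dots> = (\<integral>\<^sup>+y. ennreal (real n * gM M y) \<partial>lborel)"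
    by (intro nn_integral_cong) (simp add: emeasure_win[OF adm] ennreal_mult gM_nonneg[OF adm])
  finally have "(\<integral>\<^sup>+y. ennreal (real n * gM M y) \<partial>lborel)
       = (\<integral>\<^sup>+x. (\<integral>\<^sup>+y. ennreal (real n) * indicator {x-bw<..<x+bw} y \<partial>lborel) \<partial>M)" ..
  also have "\<dots> = (\<integral>\<^sup>+x. 1 \<partial>M)"
  proof (intro nn_integral_cong)
    fix x
    have "x - bw \<le> x + bw" using bw_pos by simp
    then show "(\<integral>\<^sup>+y. ennreal (real n) * indicator {x-bw<..<x+bw} y \<partial>lborel) = 1"
      using n_pos by (simp add: nn_integral_cmult_indicator emeasure_lborel_Ioo ennreal_mult[symmetric] bw_def)
  qed
  also have "\<dots> = 1" by (simp add: emeasure_space_1)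
  finally show ?thesis .
qed

definition "Phi = (\<integral>\<^sup>+x. ennreal (\<Sum>j\<in>{1..n+1}. ln (1 / m j) * hat n j x) \<partial>M)"

lemma int_nLf: "(\<integral>\<^sup>+y. ennreal (real n * gM M y * Lf y) \<partial>lborel) = Phi"
proof -
  have "(\<integral>\<^sup>+x. (\<integral>\<^sup>+y. ennreal (real n * Lf y) * indicator {x-bw<..<x+bw} y \<partial>lborel) \<partial>M)
       = (\<integral>\<^sup>+y. ennreal (real n * Lf y) * emeasure M {y-bw<..<y+bw} \<partial>lborel)"
    by (rule tonelli_win[OF Mprob[OF adm] Msets[OF adm]]) simp
  also have "\<dots> = (\<integral>\<^sup>+y. ennreal (real n * gM M y * Lf y) \<partial>lborel)"
    using Lf_nonneg n_pos
    by (intro nn_integral_cong) (simp add: emeasure_win[OF adm] ennreal_mult[symmetric] gM_nonneg[OF adm] mult_ac)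
  finally show ?thesis unfolding Phi_def phi_eq by simp
qed

lemma int_BZ: "(\<integral>\<^sup>+y. ennreal (Bfun y) \<partial>lborel) + (\<integral>\<^sup>+y. ennreal (Zfun y) \<partial>lborel) = 1"
proof -
  have "(\<integral>\<^sup>+y. ennreal (Bfun y) \<partial>lborel) + (\<integral>\<^sup>+y. ennreal (Zfun y) \<partial>lborel)
     = (\<integral>\<^sup>+y. ennreal (Bfun y) + ennreal (Zfun y) \<partial>lborel)"
    by (rule nn_integral_add[symmetric]) auto
  also have "\<dots> = (\<integral>\<^sup>+y. ennreal (real n * ps y) \<partial>lborel)"
    using ps_nonneg gM_nonneg[OF adm] by (intro nn_integral_cong) (auto simp: Bfun_def Zfun_def less_le)
  finally show ?thesis using int_ps by simp
qed

definition "Sint = (\<integral>\<^sup>+y. ennreal (real n * gM M y * Sfun y) \<partial>lborel)"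
definition "Zint = (\<integral>\<^sup>+y. ennreal (Zfun y) \<partial>lborel)"

lemma key: "mutual_info bw M + Sint + Zint = Phi"
proof -
  have ae: "AE y in lborel. y \<notin> EE"
    by (rule AE_not_in) (simp add: countable_imp_null_set_lborel countable_finite finite_EE)
  have "(\<integral>\<^sup>+y. ennreal (real n * gM M y * ln (1 / gM M y)) + ennreal (real n * gM M y) + ennreal (real n * gM M y * Sfun y) \<partial>lborel)
      = (\<integral>\<^sup>+y. ennreal (real n * gM M y * Lf y) + ennreal (Bfun y) \<partial>lborel)"
    using ae by (rule nn_integral_cong_AE[OF AE_mp]) (auto intro!: AE_I2 ident_pt)
  moreover have "(\<integral>\<^sup>+y. ennreal (real n * gM M y * ln (1 / gM M y)) + ennreal (real n * gM M y) + ennreal (real n * gM M y * Sfun y) \<partial>lborel)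
      = mutual_info bw M + 1 + Sint"
    unfolding mutual_info_eq[OF adm] Sint_def int_ng[symmetric]
    using gM_meas[OF adm] by (subst nn_integral_add; simp)+
  moreover have "(\<integral>\<^sup>+y. ennreal (real n * gM M y * Lf y) + ennreal (Bfun y) \<partial>lborel)
      = Phi + (\<integral>\<^sup>+y. ennreal (Bfun y) \<partial>lborel)"
    unfolding int_nLf[symmetric]
    using gM_meas[OF adm] by (subst nn_integral_add) auto
  ultimately have "mutual_info bw M + 1 + Sint = Phi + (\<integral>\<^sup>+y. ennreal (Bfun y) \<partial>lborel)" by simp
  then have "mutual_info bw M + 1 + Sint + Zint = Phi + 1"
    using int_BZ unfolding Zint_def by (metis add.assoc)
  then have "1 + (mutual_info bw M + Sint + Zint) = 1 + Phi" by (simp add: ac_simps)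
  then show ?thesis
    using ennreal_add_left_cancel_le[of 1 "mutual_info bw M + Sint + Zint" Phi]
      ennreal_add_left_cancel_le[of 1 Phi "mutual_info bw M + Sint + Zint"] by (auto intro: antisym)
qed

end
end

lemma ln_strict: fixes u :: real assumes "u > 0" "u - 1 - ln u = 0" shows "u = 1"
proof (rule ccontr)
  assume ne: "u \<noteq> 1"
  define s where "s = sqrt u"
  have s: "s > 0" "s * s = u" using assms by (auto simp: s_def)
  have "s \<noteq> 1" using ne s by auto
  then have "0 < (s - 1) * (s - 1)" by (cases "s > 1") (auto intro: mult_pos_pos mult_neg_neg)
  have "ln u = 2 * ln s" using assms by (simp add: s_def ln_sqrt)
  also have "\<dots> \<le> 2 * (s - 1)" using ln_le_minus_one[OF s(1)] by simp
  finally have "ln u \<le> 2 * (s - 1)" .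
  moreover have "2 * (s - 1) < u - 1" using \<open>0 < (s - 1) * (s - 1)\<close> s by (simp add: algebra_simps)
  ultimately show False using assms by linarith
qed

locale chanx =
  fixes n :: nat and \<alpha> lam :: real
  assumes nx1: "n \<ge> 1" and a0: "0 < \<alpha>" and a1: "\<alpha> \<le> 1" and lam0: "lam > 0"
begin

definition "cc j = (real (j - 1) / real n) powr \<alpha>"
definition "zz = (\<Sum>j\<in>{1..n+1}. exp (- lam * cc j))"
definition "mm j = exp (- lam * cc j) / zz"

lemma zz_ge1: "zz \<ge> 1"
proof -
  have "exp (- lam * cc 1) \<le> zz" unfolding zz_def
    by (rule member_le_sum) auto
  then show ?thesis by (simp add: cc_def)
qed

lemma mm_pos: "mm j > 0" using zz_ge1 by (simp add: mm_def)
lemma mm_sum: "(\<Sum>j\<in>{1..n+1}. mm j) = 1"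
  using zz_ge1 by (simp add: mm_def sum_divide_distrib[symmetric] zz_def)

sublocale chan n mm
  using nx1 mm_pos mm_sum by unfold_locales auto

lemma ln_mm: "ln (1 / mm j) = lam * cc j + ln zz"
  using zz_ge1 by (simp add: mm_def ln_div)

lemma cc_xp: "cc j = xp j powr \<alpha>" by (simp add: cc_def xp_def)

definition "Istar = (\<Sum>j\<in>{1..n+1}. mm j * cc j) * lam + ln zz"

lemma phi_bound:
  assumes "0 \<le> x" "x \<le> 1"
  shows "(\<Sum>j\<in>{1..n+1}. ln (1 / mm j) * hat n j x) \<le> lam * x powr \<alpha> + ln zz"
proof -
  have "(\<Sum>j\<in>{1..n+1}. ln (1 / mm j) * hat n j x)
      = lam * (\<Sum>j\<in>{1..n+1}. cc j * hat n j x) + ln zz * (\<Sum>j\<in>{1..n+1}. hat n j x)"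
    by (simp add: ln_mm algebra_simps sum.distrib sum_distrib_left)
  also have "(\<Sum>j\<in>{1..n+1}. hat n j x) = 1" by (rule hat_sum_one[OF nx1 assms])
  also have "(\<Sum>j\<in>{1..n+1}. cc j * hat n j x) \<le> x powr \<alpha>"
    unfolding cc_def by (rule hat_sum_c[OF nx1 assms a0 a1])
  finally show ?thesis using lam0 by (simp add: mult_left_mono)
qed

lemma Phi_bound:
  assumes adm: "admissible_input M" and cost: "cost_ok \<alpha> cbar M" and cb: "cbar \<ge> 0"
  shows "Phi M \<le> ennreal (lam * cbar + ln zz)"
proof -
  interpret prob_space M using adm by (simp add: admissible_input_def)
  have s: "sets M = sets borel" using adm by (simp add: admissible_input_def)
  have "Phi M \<le> (\<integral>\<^sup>+x. ennreal (lam * x powr \<alpha> + ln zz) \<partial>M)"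
    unfolding Phi_def[OF adm]
  proof (rule nn_integral_mono_AE)
    show "AE x in M. ennreal (\<Sum>j\<in>{1..n+1}. ln (1 / mm j) * hat n j x) \<le> ennreal (lam * x powr \<alpha> + ln zz)"
    proof (rule AE_mp[OF adm_AE01[OF adm]], rule AE_I2, rule impI)
      fix x :: real assume "x \<in> {0..1}"
      then show "ennreal (\<Sum>j\<in>{1..n+1}. ln (1 / mm j) * hat n j x) \<le> ennreal (lam * x powr \<alpha> + ln zz)"
        by (intro ennreal_leI phi_bound) auto
    qed
  qed
  also have "\<dots> = (\<integral>\<^sup>+x. ennreal lam * ennreal (x powr \<alpha>) + ennreal (ln zz) \<partial>M)"
    using lam0 zz_ge1 by (intro nn_integral_cong) (simp add: ennreal_plus ennreal_mult)
  also have "\<dots> = ennreal lam * (\<integral>\<^sup>+x. ennreal (x powr \<alpha>) \<partial>M) + ennreal (ln zz)"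
    using s by (subst nn_integral_add) (auto simp: nn_integral_cmult emeasure_space_1 measurable_cong_sets[OF s refl])
  also have "\<dots> \<le> ennreal lam * ennreal cbar + ennreal (ln zz)"
    using cost by (intro add_mono mult_left_mono) (auto simp: cost_ok_def)
  also have "\<dots> = ennreal (lam * cbar + ln zz)"
    using lam0 cb zz_ge1 by (simp add: ennreal_plus ennreal_mult)
  finally show ?thesis .
qed

abbreviation "Mst \<equiv> PM {1..n+1} xp mm"

lemma Mst_adm: "admissible_input Mst"
proof -
  have "prob_space Mst" by (rule prob_space_PM) (use mm_pos mm_sum in \<open>auto simp: less_imp_le\<close>)
  moreover have "emeasure Mst {0..1} = 1"
  proof -
    have "(\<Sum>j\<in>{1..n+1}. mm j * indicator {0..1} (xp j)) = (\<Sum>j\<in>{1..n+1}. mm j)"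
      using n_pos by (intro sum.cong) (auto simp: indicator_def xp_def divide_le_eq_1)
    then show ?thesis using mm_sum mm_pos
      by (subst emeasure_PM) (auto simp: less_imp_le)
  qed
  ultimately show ?thesis by (simp add: admissible_input_def)
qed

lemma Mst_cost: "(\<integral>\<^sup>+x. ennreal (x powr \<alpha>) \<partial>Mst) = ennreal (\<Sum>j\<in>{1..n+1}. mm j * cc j)"
proof -
  have "(\<integral>\<^sup>+x. ennreal (x powr \<alpha>) \<partial>Mst) = (\<Sum>j\<in>{1..n+1}. ennreal (mm j) * ennreal (xp j powr \<alpha>))"
    using mm_pos by (subst nn_integral_PM) (auto simp: less_imp_le)
  also have "\<dots> = (\<Sum>j\<in>{1..n+1}. ennreal (mm j * cc j))"
    using mm_pos by (intro sum.cong refl) (simp add: ennreal_mult cc_xp less_imp_le)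
  also have "\<dots> = ennreal (\<Sum>j\<in>{1..n+1}. mm j * cc j)"
    using mm_pos by (intro sum_ennreal) (simp add: cc_def less_imp_le)
  finally show ?thesis .
qed

lemma gM_Mst: "gM Mst y = ps y"
proof -
  have "gM Mst y = enn2real (emeasure Mst {y - bw<..<y + bw})"
    by (simp add: gM_def measure_def)
  also have "emeasure Mst {y - bw<..<y + bw} = ennreal (\<Sum>j\<in>{1..n+1}. mm j * indicator {y - bw<..<y + bw} (xp j))"
    using mm_pos by (subst emeasure_PM) (auto simp: less_imp_le)
  also have "(\<Sum>j\<in>{1..n+1}. mm j * indicator {y - bw<..<y + bw} (xp j)) = ps y"
    unfolding ps_def II_def by (intro sum.cong) (auto simp: indicator_def)
  finally show ?thesis using ps_nonneg by simp
qed

lemma Mst_I: "mutual_info bw Mst = Phi Mst"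
proof -
  have "Sint Mst = 0" unfolding Sint_def[OF Mst_adm] Sfun_def[OF Mst_adm] gM_Mst
    by (intro nn_integral_zero' AE_I2) auto
  moreover have "Zint Mst = 0" unfolding Zint_def[OF Mst_adm] Zfun_def[OF Mst_adm] gM_Mst
    by (intro nn_integral_zero' AE_I2) auto
  ultimately show ?thesis using key[OF Mst_adm] by simp
qed

lemma hat_meas[measurable]: "(\<lambda>x. \<Sum>j\<in>{1..n+1}. ln (1 / mm j) * hat n j x) \<in> borel_measurable borel"
  unfolding hat_def by measurable

lemma Phi_Mst: "Phi Mst = ennreal Istar"
proof -
  have "Phi Mst = (\<Sum>k\<in>{1..n+1}. ennreal (mm k) * ennreal (\<Sum>j\<in>{1..n+1}. ln (1 / mm j) * hat n j (xp k)))"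
  proof -
    have meas: "(\<lambda>x. ennreal (\<Sum>j\<in>{1..n+1}. ln (1 / mm j) * hat n j x)) \<in> borel_measurable borel"
      by measurable
    show ?thesis
      unfolding Phi_def[OF Mst_adm] using mm_pos by (subst nn_integral_PM[OF _ _ meas]) (auto simp: less_imp_le)
  qed
  also have "\<dots> = (\<Sum>k\<in>{1..n+1}. ennreal (mm k * (lam * cc k + ln zz)))"
  proof (intro sum.cong refl)
    fix k assume k: "k \<in> {1..n+1}"
    have "(\<Sum>j\<in>{1..n+1}. ln (1 / mm j) * hat n j (xp k)) = (\<Sum>j\<in>{k}. ln (1 / mm j) * hat n j (xp k))"
      by (rule sum.mono_neutral_right) (use k in \<open>auto simp: hat_node\<close>)
    also have "\<dots> = lam * cc k + ln zz" using k by (simp add: hat_node ln_mm)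
    finally have e: "(\<Sum>j\<in>{1..n+1}. ln (1 / mm j) * hat n j (xp k)) = lam * cc k + ln zz" .
    have "0 \<le> lam * cc k + ln zz" using lam0 zz_ge1 by (simp add: cc_def)
    then show "ennreal (mm k) * ennreal (\<Sum>j\<in>{1..n+1}. ln (1 / mm j) * hat n j (xp k)) = ennreal (mm k * (lam * cc k + ln zz))"
      unfolding e using mm_pos[of k] by (intro ennreal_mult[symmetric]) auto
  qed
  also have "\<dots> = ennreal (\<Sum>k\<in>{1..n+1}. mm k * (lam * cc k + ln zz))"
    using mm_pos lam0 zz_ge1 by (intro sum_ennreal) (auto simp: cc_def less_imp_le)
  also have "(\<Sum>k\<in>{1..n+1}. mm k * (lam * cc k + ln zz)) = Istar"
    unfolding Istar_def using mm_sum
    by (simp add: algebra_simps sum.distrib sum_distrib_left[symmetric] sum_distrib_right[symmetric])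
  finally show ?thesis .
qed

lemma AE_eq:
  assumes adm: "admissible_input M" and S0: "Sint M = 0" and Z0: "Zint M = 0"
  shows "AE y in lborel. gM M y = ps y"
proof -
  have a1: "AE y in lborel. ennreal (real n * gM M y * Sfun M y) = 0"
    using S0 unfolding Sint_def[OF adm] using gM_meas[OF adm] meas_aux[OF adm]
    by (subst (asm) nn_integral_0_iff_AE) auto
  have a2: "AE y in lborel. ennreal (Zfun M y) = 0"
    using Z0 unfolding Zint_def[OF adm] using meas_aux[OF adm]
    by (subst (asm) nn_integral_0_iff_AE) auto
  have ae: "AE y in lborel. y \<notin> EE"
    by (rule AE_not_in) (simp add: countable_imp_null_set_lborel countable_finite finite_EE)
  show ?thesis using a1 a2 ae
  proof (eventually_elim)
    case (elim y)
    show ?case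
    proof (cases "gM M y > 0")
      case False
      then have g0: "gM M y = 0" using gM_nonneg[OF adm, of y] by simp
      then have "Zfun M y = real n * ps y" by (simp add: Zfun_def[OF adm])
      then have "real n * ps y \<le> 0" using elim(2) by (simp add: ennreal_eq_0_iff)
      then have "ps y = 0" using ps_nonneg[of y] n_pos by (simp add: mult_le_0_iff)
      then show ?thesis using g0 by simp
    next
      case True
      obtain k where k: "k \<in> {1..n+1}" "y \<in> II k"
        using cover[OF _ _ elim(3)] gM_pos_range[OF adm True] by blast
      have psy: "ps y = mm k" by (rule ps_in[OF k(2,1)])
      have pp: "ps y > 0" using psy mm_pos by simp
      have "Sfun M y \<ge> 0" by (rule Sfun_nonneg[OF adm])
      then have "real n * gM M y * Sfun M y \<le> 0" using elim(1) by (simp add: ennreal_eq_0_iff)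
      then have "Sfun M y \<le> 0" using n_pos True
        by (metis mult_pos_pos mult_le_0_iff not_le)
      then have "ps y / gM M y - 1 - ln (ps y / gM M y) = 0"
        using Sfun_nonneg[OF adm, of y] True pp by (simp add: Sfun_def[OF adm])
      then have "ps y / gM M y = 1" by (rule ln_strict[rotated]) (use pp True in simp)
      then show ?thesis using True by simp
    qed
  qed
qed

end

lemma AE_dense:
  assumes "AE y in lborel. P y" "u < (v::real)"
  shows "\<exists>y. u < y \<and> y < v \<and> P y"
proof (rule ccontr)
  assume "\<not> ?thesis"
  then have sub: "{u<..<v} \<subseteq> {y. \<not> P y}" by auto
  from assms(1) obtain N where N: "{y \<in> space lborel. \<not> P y} \<subseteq> N" "N \<in> null_sets lborel"
    by (rule AE_E) (blast intro: null_setsI)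
  have "emeasure lborel {u<..<v} \<le> emeasure lborel N"
    using sub N by (intro emeasure_mono) auto
  then have "emeasure lborel {u<..<v} = 0" using N by auto
  then show False using assms(2) by (simp add: emeasure_lborel_Ioo)
qed

context chan begin

definition "AA j = (real j - 1) / real n"

lemma AA_xp: "j \<ge> 1 \<Longrightarrow> AA j = xp j" by (simp add: AA_def xp_def of_nat_diff)
lemma AA_Suc: "AA (Suc j) = AA j + 2 * bw" using n_pos by (simp add: AA_def bw_def field_simps)

context fixes M assumes adm: "admissible_input M" and ae: "AE y in lborel. gM M y = ps y"
begin

lemma cdf_steps:
  "j \<le> n + 1 \<Longrightarrow> AA j < s \<Longrightarrow> s < AA j + 2 * bw \<Longrightarrow> measure M {..s} = (\<Sum>i\<in>{1..j}. m i)"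
proof (induction j arbitrary: s)
  case 0
  have "AA 0 + 2 * bw = 0" using n_pos by (simp add: AA_def bw_def)
  then have "{..s} \<inter> {0..1} = {}" using 0 by auto
  then have "emeasure M {..s} = 0" by (intro adm_null[OF adm]) auto
  then show ?case by (simp add: measure_def)
next
  case (Suc j)
  interpret prob_space M by (rule Mprob[OF adm])
  have s: "sets M = sets borel" by (rule Msets[OF adm])
  have j1: "Suc j \<in> {1..n+1}" using Suc.prems by auto
  define S where "S = (\<Sum>i\<in>{1..j}. m i)"
  have good: "measure M {..<y + bw} = S + m (Suc j)"
    if y: "AA (Suc j) - bw < y" "y < AA (Suc j) + bw" "gM M y = ps y" for y
  proof -
    have yII: "y \<in> II (Suc j)" using y AA_xp[of "Suc j"] by (simp add: II_def)
    have w: "measure M {y - bw<..<y + bw} = m (Suc j)"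
      using y(3) ps_in[OF yII j1] by (simp add: gM_def)
    have "AA j < y - bw" "y - bw < AA j + 2 * bw" using y AA_Suc[of j] by auto
    then have l: "measure M {..y - bw} = S" using Suc.IH[of "y - bw"] Suc.prems by (simp add: S_def)
    have u: "{..y - bw} \<union> {y - bw<..<y + bw} = {..<y + bw}" using bw_pos by auto
    have "measure M ({..y - bw} \<union> {y - bw<..<y + bw}) = measure M {..y - bw} + measure M {y - bw<..<y + bw}"
      using s by (intro finite_measure_Union) auto
    then show ?thesis using u l w by simp
  qed
  obtain y1 where y1: "AA (Suc j) - bw < y1" "y1 < s - bw" "gM M y1 = ps y1"
    using AE_dense[OF ae, of "AA (Suc j) - bw" "s - bw"] Suc.prems by auto
  obtain y2 where y2: "s - bw < y2" "y2 < AA (Suc j) + bw" "gM M y2 = ps y2"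
    using AE_dense[OF ae, of "s - bw" "AA (Suc j) + bw"] Suc.prems by auto
  have "measure M {..<y1 + bw} \<le> measure M {..s}"
    using s y1 by (intro finite_measure_mono) auto
  moreover have "measure M {..s} \<le> measure M {..<y2 + bw}"
    using s y2 by (intro finite_measure_mono) auto
  moreover have "measure M {..<y1 + bw} = S + m (Suc j)" using good[of y1] y1 Suc.prems by auto
  moreover have "measure M {..<y2 + bw} = S + m (Suc j)" using good[of y2] y2 Suc.prems by auto
  ultimately show ?case by (simp add: S_def)
qed

lemma cdf_low: "s < 0 \<Longrightarrow> measure M {..s} = 0"
proof -
  assume "s < 0"
  then have "{..s} \<inter> {0..1} = {}" by auto
  then have "emeasure M {..s} = 0" by (intro adm_null[OF adm]) auto
  then show ?thesis by (simp add: measure_def)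
qed

lemma cdf_high: "s > 1 \<Longrightarrow> measure M {..s} = 1"
proof -
  interpret prob_space M by (rule Mprob[OF adm])
  have s: "sets M = sets borel" by (rule Msets[OF adm])
  have sp: "space M = UNIV" using sets_eq_imp_space_eq[OF s] by simp
  assume "s > 1"
  then have "{s<..} \<inter> {0..1} = {}" by auto
  then have "emeasure M {s<..} = 0" by (intro adm_null[OF adm]) auto
  then have p0: "prob {s<..} = 0" by (simp add: measure_def)
  have "prob (space M - {s<..}) = 1 - prob {s<..}" using s by (intro prob_compl) auto
  moreover have "space M - {s<..} = {..s}" using sp by auto
  ultimately show ?thesis using p0 by simp
qed

end

lemma cdf_eq_off:
  assumes adm1: "admissible_input M1" and ae1: "AE y in lborel. gM M1 y = ps y"
    and adm2: "admissible_input M2" and ae2: "AE y in lborel. gM M2 y = ps y"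
    and off: "s \<notin> xp ` {1..n+1}"
  shows "measure M1 {..s} = measure M2 {..s}"
proof -
  consider "s < 0" | "s > 1" | "0 \<le> s" "s \<le> 1" by linarith
  then show ?thesis
  proof cases
    case 1 then show ?thesis using cdf_low[OF adm1 ae1] cdf_low[OF adm2 ae2] by simp
  next
    case 2 then show ?thesis using cdf_high[OF adm1 ae1] cdf_high[OF adm2 ae2] by simp
  next
    case 3
    define j where "j = nat \<lfloor>real n * s\<rfloor> + 1"
    have fl: "of_int \<lfloor>real n * s\<rfloor> \<le> real n * s" "real n * s < of_int \<lfloor>real n * s\<rfloor> + 1" by linarith+
    have ns: "0 \<le> real n * s" "real n * s \<le> real n" using 3 n_pos by (auto simp: mult_le_cancel_left1)
    have jr: "real j - 1 = of_int \<lfloor>real n * s\<rfloor>" using ns by (simp add: j_def)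
    have j: "j \<in> {1..n+1}" using ns fl by (simp add: j_def) linarith
    have le: "AA j \<le> s" using fl jr n_pos by (simp add: AA_def divide_le_eq mult.commute)
    have lt: "s < AA j + 2 * bw" using fl jr n_pos
      by (simp add: AA_def bw_def field_simps)
    have "AA j \<noteq> s" using off j AA_xp[of j] by auto
    then have "AA j < s" using le by simp
    then show ?thesis using cdf_steps[OF adm1 ae1, of j s] cdf_steps[OF adm2 ae2, of j s] j lt by simp
  qed
qed

lemma recon_eq:
  assumes adm1: "admissible_input M1" and ae1: "AE y in lborel. gM M1 y = ps y"
    and adm2: "admissible_input M2" and ae2: "AE y in lborel. gM M2 y = ps y"
  shows "M1 = M2"
proof -
  have rd1: "real_distribution M1" using adm1
    by (simp add: admissible_input_def real_distribution_def real_distribution_axioms_def)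
  have rd2: "real_distribution M2" using adm2
    by (simp add: admissible_input_def real_distribution_def real_distribution_axioms_def)
  have "cdf M1 s = cdf M2 s" for s
  proof (cases "s \<in> xp ` {1..n+1}")
    case False then show ?thesis unfolding cdf_def by (rule cdf_eq_off[OF adm1 ae1 adm2 ae2])
  next
    case True
    then obtain j where j: "j \<in> {1..n+1}" "s = xp j" by auto
    have ev: "eventually (\<lambda>t. t \<in> {s<..<s + 2 * bw}) (at_right s)"
      by (rule eventually_at_right_real) (use bw_pos in simp)
    have off: "cdf M1 t = cdf M2 t" if t: "t \<in> {s<..<s + 2 * bw}" for t
      unfolding cdf_def
    proof (rule cdf_eq_off[OF adm1 ae1 adm2 ae2])
      show "t \<notin> xp ` {1..n+1}"
      proof
        assume "t \<in> xp ` {1..n+1}"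
        then obtain k where k: "k \<in> {1..n+1}" "t = xp k" by auto
        have "xp j < xp k" "xp k < xp j + 1 / real n" using t j k by (auto simp: bw_def)
        then have "real (j - 1) < real (k - 1)" "real (k - 1) < real (j - 1) + 1"
          using n_pos by (auto simp: xp_def divide_less_cancel field_simps)
        then have "j - 1 < k - 1" "k - 1 < j - 1 + 1" by linarith+
        then show False by linarith
      qed
    qed
    have t1: "(cdf M1 \<longlongrightarrow> cdf M1 s) (at_right s)"
      using finite_borel_measure.cdf_is_right_cont[OF real_distribution.finite_borel_measure_M[OF rd1]] by (simp add: continuous_within)
    have t2: "(cdf M2 \<longlongrightarrow> cdf M2 s) (at_right s)"
      using finite_borel_measure.cdf_is_right_cont[OF real_distribution.finite_borel_measure_M[OF rd2]] by (simp add: continuous_within)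
    have t1': "(cdf M2 \<longlongrightarrow> cdf M1 s) (at_right s)"
      using t1 by (rule tendsto_cong[THEN iffD1, rotated]) (use ev off in \<open>auto elim: eventually_mono\<close>)
    show ?thesis using tendsto_unique[OF _ t1' t2] by simp
  qed
  then show ?thesis using cdf_unique[OF rd1 rd2] by auto
qed

end

lemma lam_exists:
  fixes n :: nat and \<alpha> cbar :: real
  assumes n: "n \<ge> 1" and cb: "0 < cbar"
    and crit: "cbar < (\<Sum>j\<in>{1..n+1}. (1 / real (n + 1)) * (real (j - 1) / real n) powr \<alpha>)"
  shows "\<exists>lam>0. (\<Sum>j\<in>{1..n+1}. exp (- lam * (real (j - 1) / real n) powr \<alpha>) /
            (\<Sum>i\<in>{1..n+1}. exp (- lam * (real (i - 1) / real n) powr \<alpha>)) * (real (j - 1) / real n) powr \<alpha>) = cbar"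
proof -
  define c where "c j = (real (j - 1) / real n) powr \<alpha>" for j
  define D where "D lam = (\<Sum>i\<in>{1..n+1}. exp (- lam * c i))" for lam
  define G where "G lam = (\<Sum>j\<in>{1..n+1}. exp (- lam * c j) / D lam * c j)" for lam
  have c0: "c j \<ge> 0" for j by (simp add: c_def)
  have Dpos: "D lam > 0" for lam unfolding D_def by (intro sum_pos) auto
  have D1: "D lam \<ge> 1" if "lam \<ge> 0" for lam
  proof -
    have "exp (- lam * c 1) \<le> D lam" unfolding D_def by (rule member_le_sum) auto
    then show ?thesis by (simp add: c_def)
  qed
  have G0: "G 0 = (\<Sum>j\<in>{1..n+1}. (1 / real (n + 1)) * c j)"
    by (simp add: G_def D_def)
  define L where "L = 2 * real (n + 1) / cbar"
  have L: "L > 0" using cb by (simp add: L_def)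
  have GL: "G L \<le> cbar / 2"
  proof -
    have "G L \<le> real (card {1..n+1}) * (1 / L)"
      unfolding G_def
    proof (rule sum_bounded_above)
      fix j assume j: "j \<in> {1..n+1}"
      have "exp (- L * c j) / D L * c j \<le> exp (- L * c j) * c j"
        using D1[of L] L c0[of j] by (intro mult_right_mono) (auto simp: divide_le_eq intro: mult_left_mono[of 1, simplified])
      also have "\<dots> \<le> 1 / L"
      proof -
        have "L * c j \<le> exp (L * c j)" using exp_ge_add_one_self[of "L * c j"] by linarith
        then have "c j \<le> exp (L * c j) / L" using L by (simp add: field_simps)
        then show ?thesis using L by (simp add: exp_minus field_simps)
      qed
      finally show "exp (- L * c j) / D L * c j \<le> 1 / L" .
    qed
    also have "\<dots> = cbar / 2" using cb by (simp add: L_def field_simps)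
    finally show ?thesis .
  qed
  have cont: "continuous_on {0..L} G"
    unfolding G_def D_def using Dpos[unfolded D_def]
    by (intro continuous_intros) (metis less_irrefl)
  obtain lam where lam: "0 \<le> lam" "lam \<le> L" "G lam = cbar"
    using IVT2'[of G L cbar 0, OF _ _ _ cont] GL G0 crit cb L by (auto simp: c_def)
  have "lam \<noteq> 0" using lam G0 crit by (auto simp: c_def)
  then show ?thesis using lam by (intro exI[of _ lam]) (auto simp: G_def D_def c_def)
qed

theorem mainTheorem1:
  fixes b \<alpha> cbar :: real
  assumes "b > 0" and "unif_r b \<in> \<nat>"
    and "0 < \<alpha>" and "\<alpha> \<le> 1"
    and "0 < cbar" and "cbar < crit_cost_nat b \<alpha>"
  shows "\<exists>lam>0.
    (let n = std_n b;
         x = (\<lambda>j::nat. real (j - 1) / real n);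
         c = (\<lambda>j. x j powr \<alpha>);
         z = (\<Sum>j\<in>{1..n+1}. exp (- lam * c j));
         m = (\<lambda>j. exp (- lam * c j) / z)
     in (\<Sum>j\<in>{1..n+1}. m j * c j) = cbar \<and>
        (\<forall>M. capacity_achieving b \<alpha> cbar M \<longleftrightarrow> M = point_masses {1..n+1} x m))"
proof -
  note b0 = assms(1) and rN = assms(2) and a0 = assms(3) and a1 = assms(4) and cb0 = assms(5) and crit = assms(6)
  define n where "n = std_n b"
  obtain k :: nat where k: "unif_r b = real k" using rN by (auto elim: Nats_cases)
  have rpos: "unif_r b > 0" using b0 by (simp add: unif_r_def)
  have nk: "n = k" by (simp add: n_def std_n_def k)
  have n1: "n \<ge> 1" using rpos k nk by simp
  have bn: "b = 1 / (2 * real n)"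
  proof -
    have "b * (real k * 2) = 1" using k b0 unfolding unif_r_def by (simp add: field_simps)
    moreover have "real k > 0" using n1 nk by simp
    ultimately show ?thesis using nk by (simp add: field_simps)
  qed
  have crit': "cbar < (\<Sum>j\<in>{1..n+1}. (1 / real (n + 1)) * (real (j - 1) / real n) powr \<alpha>)"
    using crit by (simp add: crit_cost_nat_def n_def Let_def)
  obtain lam where lam0: "lam > 0" and lameq: "(\<Sum>j\<in>{1..n+1}. exp (- lam * (real (j - 1) / real n) powr \<alpha>) /
            (\<Sum>i\<in>{1..n+1}. exp (- lam * (real (i - 1) / real n) powr \<alpha>)) * (real (j - 1) / real n) powr \<alpha>) = cbar"
    using lam_exists[OF n1 cb0 crit'] by blast
  interpret X: chanx n \<alpha> lam using n1 a0 a1 lam0 by unfold_locales auto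
  have bX: "b = X.bw" by (simp add: X.bw_def bn)
  have mm_eq: "(\<lambda>j. exp (- lam * (real (j - 1) / real n) powr \<alpha>) / (\<Sum>i\<in>{1..n+1}. exp (- lam * (real (i - 1) / real n) powr \<alpha>))) = X.mm"
    by (simp add: X.mm_def X.zz_def X.cc_def fun_eq_iff)
  have xp_eq: "(\<lambda>j. real (j - 1) / real n) = X.xp" by (simp add: X.xp_def fun_eq_iff)
  have sumc: "(\<Sum>j\<in>{1..n+1}. X.mm j * X.cc j) = cbar"
    using lameq by (simp add: X.mm_def X.zz_def X.cc_def)
  have pm: "point_masses {1..n+1} X.xp X.mm = X.Mst"
    using X.mm_pos by (intro point_masses_PM) (auto simp: less_imp_le)
  define Ist where "Ist = lam * cbar + ln X.zz"
  have Ist_eq: "X.Istar = Ist" unfolding X.Istar_def sumc Ist_def by (simp add: mult.commute)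
  have upper: "mutual_info b M' + X.Sint M' + X.Zint M' \<le> ennreal Ist"
    if "admissible_input M'" "cost_ok \<alpha> cbar M'" for M'
    using X.key[OF that(1)] X.Phi_bound[OF that cb0[THEN less_imp_le]] by (simp add: bX Ist_def)
  have upper': "mutual_info b M' \<le> ennreal Ist"
    if "admissible_input M'" "cost_ok \<alpha> cbar M'" for M'
    using upper[OF that] by (metis add.assoc le_iff_add order_trans)
  have Mst_val: "mutual_info b X.Mst = ennreal Ist"
    using X.Mst_I X.Phi_Mst Ist_eq by (simp add: bX)
  have Mst_cost: "cost_ok \<alpha> cbar X.Mst"
    using X.Mst_cost sumc by (simp add: cost_ok_def)
  have iff: "capacity_achieving b \<alpha> cbar M \<longleftrightarrow> M = X.Mst" for M
  proof
    assume M: "M = X.Mst"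
    show "capacity_achieving b \<alpha> cbar M"
      unfolding capacity_achieving_def M using X.Mst_adm Mst_cost upper' Mst_val by auto
  next
    assume ca: "capacity_achieving b \<alpha> cbar M"
    then have adm: "admissible_input M" and cost: "cost_ok \<alpha> cbar M"
      and ge: "mutual_info b X.Mst \<le> mutual_info b M"
      using X.Mst_adm Mst_cost by (auto simp: capacity_achieving_def)
    have ge': "ennreal Ist \<le> mutual_info b M" using ge Mst_val by simp
    have le: "mutual_info b M + (X.Sint M + X.Zint M) \<le> mutual_info b M + 0"
      using order_trans[OF upper[OF adm cost] ge'] by (simp add: add.assoc)
    have fin: "mutual_info b M \<noteq> \<infinity>" using upper'[OF adm cost] by (auto simp: top_unique)
    have "X.Sint M + X.Zint M \<le> 0" using le fin ennreal_add_left_cancel_le by metis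
    then have S0: "X.Sint M = 0" and Z0: "X.Zint M = 0" by auto
    have ae1: "AE y in lborel. X.gM M y = X.ps y" by (rule X.AE_eq[OF adm S0 Z0])
    have ae2: "AE y in lborel. X.gM X.Mst y = X.ps y" by (intro AE_I2) (rule X.gM_Mst)
    show "M = X.Mst" by (rule X.recon_eq[OF adm ae1 X.Mst_adm ae2])
  qed
  show ?thesis
    unfolding Let_def n_def[symmetric]
    apply (rule exI[of _ lam])
    apply (intro conjI lam0)
    subgoal using lameq by simp
    subgoal unfolding mm_eq xp_eq pm using iff by blast
    done
qed


end
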